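(* Let $K$ be a field of characteristic zero, $R=K[x,y,z]$ with the standard grading, and let $a,b,c,\beta,\gamma$ be integers with $a\geq c\geq 2$, $1\leq \beta\leq b-1$ and $\max\{1,b-a+1\}\leq \gamma\leq \min\{b-1,c-1\}$. Consider the ideal $$I=(x^a,\ y^b-x^{b-\gamma}z^\gamma,\ z^c,\ x^{a-b+\gamma}y^{b-\beta},\ y^{b-\beta}z^{c-\gamma})\subset R.$$ If $a\leq 2b-c$, then $R/I$ has the weak Lefschetz property for every $\beta$ with $|a-b|+c-1\leq \beta\leq b-1$.
   Context: A graded Artinian $K$-algebra $A=\bigoplus_i [A]_i$ has the weak Lefschetz property (WLP) if there exists a linear form $L\in[A]_1$ such that the multiplication map $\times L:[A]_i\to[A]_{i+1}$ has maximal rank (i.e. is injective or surjective) for every $i$. *)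

theory Defs
  imports Main "HOL-Library.Poly_Mapping" "HOL-Library.Product_Plus"
begin

text \<open>Polynomials in three variables x, y, z over a field: finitely supported
  maps from exponent vectors (i,j,k) (standing for x^i y^j z^k) to coefficients,
  with the convolution product of HOL-Library.Poly_Mapping.\<close>

type_synonym 'k poly3 = "(nat \<times> nat \<times> nat) \<Rightarrow>\<^sub>0 'k"

definition varX :: "'k::comm_ring_1 poly3" where
  "varX = Poly_Mapping.single (1, 0, 0) 1"
definition varY :: "'k::comm_ring_1 poly3" where
  "varY = Poly_Mapping.single (0, 1, 0) 1"
definition varZ :: "'k::comm_ring_1 poly3" where
  "varZ = Poly_Mapping.single (0, 0, 1) 1"

definition mdeg :: "nat \<times> nat \<times> nat \<Rightarrow> nat" where
  "mdeg m = fst m + fst (snd m) + snd (snd m)"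

definition homog :: "nat \<Rightarrow> 'k::comm_ring_1 poly3 set" where
  "homog d = {f. \<forall>m \<in> Poly_Mapping.keys f. mdeg m = d}"

definition ideal_gen :: "'k::comm_ring_1 poly3 list \<Rightarrow> 'k poly3 set" where
  "ideal_gen gs = {f. \<exists>hs. f = (\<Sum>i<length gs. hs i * gs ! i)}"

text \<open>Maximal rank of multiplication by L from [R/I]_i to [R/I]_(i+1), written out
  on representatives: injectivity, or surjectivity.\<close>
definition mult_inj :: "'k::comm_ring_1 poly3 set \<Rightarrow> 'k poly3 \<Rightarrow> nat \<Rightarrow> bool" where
  "mult_inj I L i = (\<forall>f \<in> homog i. L * f \<in> I \<longrightarrow> f \<in> I)"

definition mult_surj :: "'k::comm_ring_1 poly3 set \<Rightarrow> 'k poly3 \<Rightarrow> nat \<Rightarrow> bool" where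
  "mult_surj I L i = (\<forall>g \<in> homog (Suc i). \<exists>f \<in> homog i. g - L * f \<in> I)"

definition has_WLP :: "'k::comm_ring_1 poly3 set \<Rightarrow> bool" where
  "has_WLP I = (\<exists>L \<in> homog 1. \<forall>i. mult_inj I L i \<or> mult_surj I L i)"

end

theory Submission
  imports Defs
begin

lemma ideal_gen_add: "f \<in> ideal_gen gs \<Longrightarrow> g \<in> ideal_gen gs \<Longrightarrow> f + g \<in> ideal_gen gs"
proof -
  assume "f \<in> ideal_gen gs" "g \<in> ideal_gen gs"
  then obtain hs hs' where "f = (\<Sum>i<length gs. hs i * gs ! i)" "g = (\<Sum>i<length gs. hs' i * gs ! i)"
    unfolding ideal_gen_def by auto
  then have "f + g = (\<Sum>i<length gs. (hs i + hs' i) * gs ! i)"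
    by (simp add: sum.distrib distrib_right)
  then show ?thesis unfolding ideal_gen_def by (auto intro!: exI[where x="\<lambda>i. hs i + hs' i"])
qed

lemma ideal_gen_mult: "f \<in> ideal_gen gs \<Longrightarrow> h * f \<in> ideal_gen gs"
proof -
  assume "f \<in> ideal_gen gs"
  then obtain hs where "f = (\<Sum>i<length gs. hs i * gs ! i)"
    unfolding ideal_gen_def by auto
  then have "h * f = (\<Sum>i<length gs. (h * hs i) * gs ! i)"
    by (simp add: sum_distrib_left mult.assoc)
  then show ?thesis unfolding ideal_gen_def by (auto intro!: exI[where x="\<lambda>i. h * hs i"])
qed

lemma ideal_gen_zero: "0 \<in> ideal_gen gs"
  unfolding ideal_gen_def by (rule CollectI, rule exI[of _ "\<lambda>_. 0"]) simp

lemma ideal_gen_uminus: "f \<in> ideal_gen gs \<Longrightarrow> - f \<in> ideal_gen gs"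
  using ideal_gen_mult[of f gs "-1"] by simp

lemma ideal_gen_diff: "f \<in> ideal_gen gs \<Longrightarrow> g \<in> ideal_gen gs \<Longrightarrow> f - g \<in> ideal_gen gs"
  using ideal_gen_add[of f gs "-g"] ideal_gen_uminus[of g gs] by simp

lemma ideal_gen_sum: "finite A \<Longrightarrow> (\<And>x. x \<in> A \<Longrightarrow> f x \<in> ideal_gen gs) \<Longrightarrow> sum f A \<in> ideal_gen gs"
  by (induction A rule: finite_induct) (auto intro: ideal_gen_zero ideal_gen_add)

lemma ideal_gen_gen: "i < length gs \<Longrightarrow> gs ! i \<in> ideal_gen gs"
proof -
  assume i: "i < length gs"
  have "(\<Sum>j<length gs. (if j = i then 1 else 0) * gs ! j) = gs ! i"
  proof -
    have "(\<Sum>j<length gs. (if j = i then 1 else 0) * gs ! j) = (\<Sum>j<length gs. if j = i then gs ! j else 0)"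
      by (rule sum.cong) auto
    then show ?thesis using i by (simp add: sum.delta)
  qed
  then show ?thesis unfolding ideal_gen_def by (auto intro!: exI[where x="\<lambda>j. if j = i then 1 else 0"])
qed

lemma pm_expand: "f = (\<Sum>m\<in>Poly_Mapping.keys f. Poly_Mapping.single m (Poly_Mapping.lookup f m))"
  by (rule poly_mapping_eqI) (simp add: lookup_sum lookup_single when_def sum.delta in_keys_iff)

lemma mon_mult: "Poly_Mapping.single m x * Poly_Mapping.single n y = Poly_Mapping.single (m + n) (x * y)"
  by (rule mult_single)

lemma single000: "Poly_Mapping.single (0::nat, 0::nat, 0::nat) (1::'k::comm_ring_1) = 1"
proof -
  have "(0::nat, 0::nat, 0::nat) = 0" by (simp add: zero_prod_def)
  then show ?thesis by simp
qed

lemma varX_pow: "(varX :: 'k::comm_ring_1 poly3) ^ n = Poly_Mapping.single (n, 0, 0) 1"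
  by (induction n) (simp_all add: varX_def mult_single single000)
lemma varY_pow: "(varY :: 'k::comm_ring_1 poly3) ^ n = Poly_Mapping.single (0, n, 0) 1"
  by (induction n) (simp_all add: varY_def mult_single single000)
lemma varZ_pow: "(varZ :: 'k::comm_ring_1 poly3) ^ n = Poly_Mapping.single (0, 0, n) 1"
  by (induction n) (simp_all add: varZ_def mult_single single000)



lemma inj1d:
  fixes w :: "nat \<Rightarrow> 'k::comm_ring_1"
  assumes sup: "\<And>J. w J \<noteq> 0 \<Longrightarrow> src J"
    and rel: "\<And>J. tgt J \<Longrightarrow> w J + (if 0 < J then w (J - 1) else 0) = 0"
    and bnd: "\<And>J. src J \<Longrightarrow> J < N"
    and noss: "\<And>J1 J2. J1 \<le> J2 \<Longrightarrow> src J1 \<Longrightarrow> \<not> tgt J1 \<Longrightarrow> (\<forall>J. J1 \<le> J \<and> J \<le> J2 \<longrightarrow> src J) \<Longrightarrow> \<not> tgt (Suc J2) \<Longrightarrow> False"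
  shows "w J = 0"
proof (rule ccontr)
  assume "w J \<noteq> 0"
  define J1 where "J1 = (LEAST J. w J \<noteq> 0)"
  have w1: "w J1 \<noteq> 0" unfolding J1_def by (rule LeastI[of _ J]) fact
  have below: "\<And>J. J < J1 \<Longrightarrow> w J = 0" unfolding J1_def using not_less_Least by blast
  have nt1: "\<not> tgt J1"
  proof
    assume "tgt J1"
    then have "w J1 + (if 0 < J1 then w (J1 - 1) else 0) = 0" by (rule rel)
    moreover have "(if 0 < J1 then w (J1 - 1) else 0) = 0" using below by auto
    ultimately show False using w1 by simp
  qed
  have all: "\<forall>m\<le>n. w (J1 + m) \<noteq> 0" for n
  proof (induction n)
    case 0 then show ?case using w1 by simp
  next
    case (Suc n)
    have srcs: "\<forall>J. J1 \<le> J \<and> J \<le> J1 + n \<longrightarrow> src J"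
    proof (intro allI impI)
      fix J assume "J1 \<le> J \<and> J \<le> J1 + n"
      then have "J = J1 + (J - J1)" "J - J1 \<le> n" by auto
      then show "src J" using Suc sup by metis
    qed
    have "tgt (Suc (J1 + n))"
    proof (rule ccontr)
      assume "\<not> tgt (Suc (J1 + n))"
      then show False using noss[of J1 "J1 + n"] srcs nt1 sup w1 by auto
    qed
    then have "w (Suc (J1 + n)) + w (J1 + n) = 0" using rel by fastforce
    then have "w (J1 + Suc n) \<noteq> 0" using Suc by (auto simp: add_eq_0_iff)
    then show ?case using Suc by (auto simp: le_Suc_eq)
  qed
  then have "w (J1 + N) \<noteq> 0" by blast
  then have "J1 + N < N" using sup bnd by blast
  then show False by simp
qed

lemma surj1d:
  assumes t0: "tgt J0"
    and bnd: "\<And>J. src J \<Longrightarrow> J < N"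
    and nott: "\<And>J1 J2. J1 \<le> J2 \<Longrightarrow> tgt J1 \<Longrightarrow> (J1 = 0 \<or> \<not> src (J1 - 1)) \<Longrightarrow> (\<forall>J. J1 \<le> J \<and> J \<le> J2 \<longrightarrow> tgt J) \<Longrightarrow> (\<forall>J. J1 \<le> J \<and> J < J2 \<longrightarrow> src J) \<Longrightarrow> \<not> src J2 \<Longrightarrow> False"
  shows "(\<exists>J'<J0. \<not> tgt J' \<and> (\<forall>J. J' \<le> J \<and> J < J0 \<longrightarrow> src J)) \<or> (\<exists>J''\<ge>J0. \<not> tgt (Suc J'') \<and> (\<forall>J. J0 \<le> J \<and> J \<le> J'' \<longrightarrow> src J))"
proof (rule ccontr)
  assume H: "\<not> ?thesis"
  define P where "P m \<longleftrightarrow> (\<forall>J. m \<le> J \<and> J < J0 \<longrightarrow> src J)" for m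
  define m where "m = (LEAST m. P m)"
  have Pm: "P m" unfolding m_def by (rule LeastI[of _ J0]) (auto simp: P_def)
  have mle: "m \<le> J0" unfolding m_def by (rule Least_le) (auto simp: P_def)
  have mleft: "m = 0 \<or> \<not> src (m - 1)"
  proof (rule ccontr)
    assume "\<not> (m = 0 \<or> \<not> src (m - 1))"
    then have "m > 0" "src (m - 1)" by auto
    have "P (m - 1)" unfolding P_def
    proof (intro allI impI)
      fix J assume "m - 1 \<le> J \<and> J < J0"
      then show "src J" using Pm \<open>src (m - 1)\<close> unfolding P_def by (cases "J = m - 1") auto
    qed
    moreover have "m - 1 < m" using \<open>m > 0\<close> by simp
    ultimately show False unfolding m_def using not_less_Least by blast
  qed
  have tleft: "\<forall>J. m \<le> J \<and> J \<le> J0 \<longrightarrow> tgt J"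
  proof (intro allI impI)
    fix J assume J: "m \<le> J \<and> J \<le> J0"
    show "tgt J"
    proof (cases "J = J0")
      case True then show ?thesis using t0 by simp
    next
      case False
      then have "J < J0" using J by simp
      moreover have "\<forall>J'. J \<le> J' \<and> J' < J0 \<longrightarrow> src J'" using Pm J unfolding P_def by auto
      ultimately show ?thesis using H by blast
    qed
  qed
  define M where "M = (LEAST M. J0 \<le> M \<and> \<not> src M)"
  have ex: "J0 \<le> max J0 N \<and> \<not> src (max J0 N)" using bnd[of "max J0 N"] by auto
  have M1: "J0 \<le> M \<and> \<not> src M" unfolding M_def by (rule LeastI[of _ "max J0 N"]) (rule ex)
  have M2: "\<forall>J. J0 \<le> J \<and> J < M \<longrightarrow> src J"
    using not_less_Least[where P="\<lambda>M. J0 \<le> M \<and> \<not> src M"] unfolding M_def[symmetric] by blast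
  have tright: "\<forall>J. J0 \<le> J \<and> J \<le> M \<longrightarrow> tgt J"
  proof (intro allI impI)
    fix J assume J: "J0 \<le> J \<and> J \<le> M"
    show "tgt J"
    proof (cases "J = J0")
      case True then show ?thesis using t0 by simp
    next
      case False
      define J' where "J' = J - 1"
      have J': "J = Suc J'" "J0 \<le> J'" "J' < M" using J False unfolding J'_def by auto
      have "\<forall>J''. J0 \<le> J'' \<and> J'' \<le> J' \<longrightarrow> src J''" using M2 J' by auto
      then show ?thesis using H J' by blast
    qed
  qed
  show False
  proof (rule nott[of m M])
    show "m \<le> M" using mle M1 by simp
    show "tgt m" using tleft mle by simp
    show "m = 0 \<or> \<not> src (m - 1)" by (rule mleft)
    show "\<forall>J. m \<le> J \<and> J \<le> M \<longrightarrow> tgt J"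
    proof (intro allI impI)
      fix J assume "m \<le> J \<and> J \<le> M"
      then show "tgt J" using tleft tright by (cases "J \<le> J0") auto
    qed
    show "\<forall>J. m \<le> J \<and> J < M \<longrightarrow> src J"
    proof (intro allI impI)
      fix J assume "m \<le> J \<and> J < M"
      then show "src J" using Pm M2 unfolding P_def by (cases "J < J0") auto
    qed
    show "\<not> src M" using M1 by simp
  qed
qed



locale wlp =
  fixes a b c g q p r B :: nat
  assumes hb: "b = B + g" and ha: "a = p + B" and hc: "c = r + g"
    and hg: "1 \<le> g" and hB: "1 \<le> B" and hp: "1 \<le> p" and hq1: "1 \<le> q" and hqb: "q < b"
    and hr: "1 \<le> r"
    and h1: "q + c \<le> a + 1" and h2: "a + q + c \<le> 2 * b + 1" and h3: "p + q \<le> b"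
begin

definition std :: "nat \<times> nat \<times> nat \<Rightarrow> bool" where
  "std m = (case m of (i, j, k) \<Rightarrow> i < a \<and> j < b \<and> k < c \<and> \<not> (p \<le> i \<and> q \<le> j) \<and> \<not> (q \<le> j \<and> r \<le> k))"

lemma std_simp: "std (i, j, k) \<longleftrightarrow> i < a \<and> j < b \<and> k < c \<and> \<not> (p \<le> i \<and> q \<le> j) \<and> \<not> (q \<le> j \<and> r \<le> k)"
  by (simp add: std_def)

definition red :: "nat \<times> nat \<times> nat \<Rightarrow> nat \<times> nat \<times> nat" where
  "red m = (case m of (i, j, k) \<Rightarrow> (i + (j div b) * B, j mod b, k + (j div b) * g))"

lemma red_simp: "red (i, j, k) = (i + (j div b) * B, j mod b, k + (j div b) * g)"
  by (simp add: red_def)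

lemma bpos: "0 < b" using hb hg by simp

lemma red_std: "j < b \<Longrightarrow> red (i, j, k) = (i, j, k)"
  by (simp add: red_simp)

definition NFc :: "nat \<times> nat \<times> nat \<Rightarrow> 'k::comm_ring_1 \<Rightarrow> 'k poly3" where
  "NFc m x = (if std (red m) then Poly_Mapping.single (red m) x else 0)"

definition Phi :: "'k::comm_ring_1 poly3 \<Rightarrow> 'k poly3" where
  "Phi f = (\<Sum>m\<in>Poly_Mapping.keys f. NFc m (Poly_Mapping.lookup f m))"

definition gens :: "'k::comm_ring_1 poly3 list" where
  "gens = [Poly_Mapping.single (a, 0, 0) 1,
           Poly_Mapping.single (0, b, 0) 1 - Poly_Mapping.single (B, 0, g) 1,
           Poly_Mapping.single (0, 0, c) 1,
           Poly_Mapping.single (p, q, 0) 1,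
           Poly_Mapping.single (0, q, r) 1]"

lemma NFc_0 [simp]: "NFc m 0 = 0" by (simp add: NFc_def)
lemma NFc_add: "NFc m (x + y) = NFc m x + NFc m y" by (simp add: NFc_def single_add)
lemma NFc_uminus: "NFc m (- x) = - NFc m x" by (simp add: NFc_def single_uminus)

lemma Phi_superset:
  assumes "finite A" "Poly_Mapping.keys f \<subseteq> A"
  shows "Phi f = (\<Sum>m\<in>A. NFc m (Poly_Mapping.lookup f m))"
  unfolding Phi_def
  by (rule sum.mono_neutral_left) (use assms in \<open>auto simp: in_keys_iff\<close>)

lemma Phi_add: "Phi (f + h) = Phi f + Phi h"
proof -
  let ?A = "Poly_Mapping.keys f \<union> Poly_Mapping.keys h"
  have fin: "finite ?A" by simp
  have "Phi (f + h) = (\<Sum>m\<in>?A. NFc m (Poly_Mapping.lookup (f + h) m))"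
    using keys_add[of f h] by (intro Phi_superset) auto
  also have "\<dots> = (\<Sum>m\<in>?A. NFc m (Poly_Mapping.lookup f m)) + (\<Sum>m\<in>?A. NFc m (Poly_Mapping.lookup h m))"
    by (simp add: lookup_add NFc_add sum.distrib)
  also have "\<dots> = Phi f + Phi h"
    by (simp add: Phi_superset[symmetric])
  finally show ?thesis .
qed

lemma Phi_zero [simp]: "Phi 0 = 0" by (simp add: Phi_def)

lemma Phi_uminus: "Phi (- f) = - Phi f"
  by (simp add: Phi_def NFc_uminus sum_negf)

lemma Phi_diff: "Phi (f - h) = Phi f - Phi h"
  using Phi_add[of f "- h"] by (simp add: Phi_uminus)

lemma Phi_sum: "finite A \<Longrightarrow> Phi (sum F A) = (\<Sum>x\<in>A. Phi (F x))"
  by (induction A rule: finite_induct) (simp_all add: Phi_add)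

lemma Phi_single: "Phi (Poly_Mapping.single m x) = NFc m x"
  by (cases "x = 0") (simp_all add: Phi_def)

lemma Phi_mult_gen:
  assumes "\<And>n x. Phi (Poly_Mapping.single n x * G) = 0"
  shows "Phi (h * G) = 0"
proof -
  have "h * G = (\<Sum>m\<in>Poly_Mapping.keys h. Poly_Mapping.single m (Poly_Mapping.lookup h m) * G)"
    by (subst pm_expand[of h]) (simp add: sum_distrib_right)
  then show ?thesis by (simp add: Phi_sum assms)
qed

lemma gen0: "Phi (Poly_Mapping.single n x * Poly_Mapping.single (a, 0, 0) 1) = 0"
proof -
  obtain i j k where n: "n = (i, j, k)" by (cases n) auto
  have "\<not> std (red (i + a, j, k))" by (simp add: red_simp std_simp)
  then show ?thesis by (simp add: n mult_single Phi_single NFc_def)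
qed

lemma gen2: "Phi (Poly_Mapping.single n x * Poly_Mapping.single (0, 0, c) 1) = 0"
proof -
  obtain i j k where n: "n = (i, j, k)" by (cases n) auto
  have "\<not> std (red (i, j, k + c))" by (simp add: red_simp std_simp)
  then show ?thesis by (simp add: n mult_single Phi_single NFc_def)
qed

lemma gen1: "Phi (Poly_Mapping.single n x * (Poly_Mapping.single (0, b, 0) 1 - Poly_Mapping.single (B, 0, g) 1)) = 0"
proof -
  obtain i j k where n: "n = (i, j, k)" by (cases n) auto
  have d: "(j + b) div b = Suc (j div b)" "(j + b) mod b = j mod b" "(b + j) div b = Suc (j div b)" "(b + j) mod b = j mod b" using bpos by (simp_all add: div_add_self2 div_add_self1)
  have "red (i, j + b, k) = red (i + B, j, k + g)"
    by (simp add: red_simp d algebra_simps)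
  then show ?thesis by (simp add: n mult_single Phi_single NFc_def right_diff_distrib Phi_diff)
qed

lemma gen3: "Phi (Poly_Mapping.single n x * Poly_Mapping.single (p, q, 0) 1) = 0"
proof -
  obtain i j k where n: "n = (i, j, k)" by (cases n) auto
  have "\<not> std (red (i + p, j + q, k))"
  proof (cases "q \<le> (j + q) mod b")
    case True then show ?thesis by (simp add: red_simp std_simp)
  next
    case False
    have "(j + q) div b \<noteq> 0"
    proof
      assume "(j + q) div b = 0"
      then have "(j + q) mod b = j + q" using div_mult_mod_eq[of "j + q" b] by simp
      then show False using False by simp
    qed
    then have "B \<le> (j + q) div b * B" by simp
    then have "a \<le> i + p + (j + q) div b * B" using ha by linarith
    then show ?thesis by (simp add: red_simp std_simp)
  qed
  then show ?thesis by (simp add: n mult_single Phi_single NFc_def)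
qed

lemma gen4: "Phi (Poly_Mapping.single n x * Poly_Mapping.single (0, q, r) 1) = 0"
proof -
  obtain i j k where n: "n = (i, j, k)" by (cases n) auto
  have "\<not> std (red (i, j + q, k + r))"
  proof (cases "q \<le> (j + q) mod b")
    case True then show ?thesis by (simp add: red_simp std_simp)
  next
    case False
    have "(j + q) div b \<noteq> 0"
    proof
      assume "(j + q) div b = 0"
      then have "(j + q) mod b = j + q" using div_mult_mod_eq[of "j + q" b] by simp
      then show False using False by simp
    qed
    then have "g \<le> (j + q) div b * g" by simp
    then have "c \<le> k + r + (j + q) div b * g" using hc by linarith
    then show ?thesis by (simp add: red_simp std_simp)
  qed
  then show ?thesis by (simp add: n mult_single Phi_single NFc_def)
qed

lemma gens_Phi: "i < length (gens :: 'k::comm_ring_1 poly3 list) \<Longrightarrow> Phi (Poly_Mapping.single n x * (gens ! i :: 'k poly3)) = 0"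
proof -
  assume "i < length (gens :: 'k poly3 list)"
  then have "i < 5" by (simp add: gens_def)
  then have "i = 0 \<or> i = 1 \<or> i = 2 \<or> i = 3 \<or> i = 4" by presburger
  then show ?thesis
  proof (elim disjE)
    assume "i = 0" then show ?thesis unfolding gens_def by (simp only: nth_Cons_0 gen0)
  next
    assume "i = 1" then show ?thesis unfolding gens_def by (simp only: One_nat_def nth_Cons_Suc nth_Cons_0 gen1)
  next
    assume "i = 2" then show ?thesis unfolding gens_def by (simp only: numeral_2_eq_2 nth_Cons_Suc nth_Cons_0 gen2)
  next
    assume "i = 3" then show ?thesis unfolding gens_def by (simp only: numeral_3_eq_3 nth_Cons_Suc nth_Cons_0 gen3)
  next
    assume "i = 4"
    moreover have "(4::nat) = Suc (Suc (Suc (Suc 0)))" by simp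
    ultimately show ?thesis unfolding gens_def by (simp only: nth_Cons_Suc nth_Cons_0 gen4)
  qed
qed

lemma Phi_I: "(f :: 'k::comm_ring_1 poly3) \<in> ideal_gen gens \<Longrightarrow> Phi f = 0"
proof -
  assume "f \<in> ideal_gen gens"
  then have "\<exists>hs. f = (\<Sum>i<length (gens :: 'k poly3 list). hs i * gens ! i)" unfolding ideal_gen_def by (rule CollectD)
  then obtain hs where f: "f = (\<Sum>i<length (gens :: 'k poly3 list). hs i * gens ! i)" by (rule exE)
  have z: "Phi (hs i * (gens ! i :: 'k poly3)) = 0" if "i < length (gens :: 'k poly3 list)" for i
    using gens_Phi[OF that] by (rule Phi_mult_gen)
  have "Phi f = (\<Sum>i<length (gens :: 'k poly3 list). Phi (hs i * gens ! i))"
    unfolding f by (rule Phi_sum) simp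
  also have "\<dots> = 0" using z by simp
  finally show ?thesis .
qed

end


lemma homog_zero: "0 \<in> homog d" by (simp add: homog_def)
lemma homog_add: "f \<in> homog d \<Longrightarrow> h \<in> homog d \<Longrightarrow> f + h \<in> homog d"
  unfolding homog_def
proof (intro CollectI ballI)
  fix m assume "f \<in> {f. \<forall>m\<in>Poly_Mapping.keys f. mdeg m = d}" "h \<in> {f. \<forall>m\<in>Poly_Mapping.keys f. mdeg m = d}"
    "m \<in> Poly_Mapping.keys (f + h)"
  moreover have "m \<in> Poly_Mapping.keys f \<union> Poly_Mapping.keys h" by (rule subsetD[OF keys_add]) fact
  ultimately show "mdeg m = d" by (auto simp only: mem_Collect_eq Un_iff)
qed
lemma homog_sum: "finite A \<Longrightarrow> (\<And>x. x \<in> A \<Longrightarrow> F x \<in> homog d) \<Longrightarrow> sum F A \<in> homog d"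
proof (induction A rule: finite_induct)
  case empty then show ?case by (simp add: homog_zero)
next
  case (insert x F) then show ?case by (simp add: homog_add)
qed
lemma homog_single: "mdeg m = d \<Longrightarrow> Poly_Mapping.single m x \<in> homog d"
  by (simp add: homog_def)
lemma homog_uminus: "f \<in> homog d \<Longrightarrow> - f \<in> homog d"
  by (simp add: homog_def)
lemma mdeg_simp: "mdeg (i, j, k) = i + j + k" by (simp add: mdeg_def)

context wlp
begin

abbreviation II :: "'k::comm_ring_1 poly3 set" where "II \<equiv> ideal_gen gens"

lemma len_gens: "length (gens :: 'k::comm_ring_1 poly3 list) = 5" by (simp add: gens_def)

lemma gen_in: "i < 5 \<Longrightarrow> (gens ! i :: 'k::comm_ring_1 poly3) \<in> II"
  by (rule ideal_gen_gen) (simp add: len_gens)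

lemma I_step: "Poly_Mapping.single (i, j + b, k) (1::'k::comm_ring_1) - Poly_Mapping.single (i + B, j, k + g) 1 \<in> II"
proof -
  have "Poly_Mapping.single (i, j, k) (1::'k) * (gens ! 1) \<in> II"
    by (rule ideal_gen_mult) (rule gen_in, simp)
  moreover have "Poly_Mapping.single (i, j, k) (1::'k) * (gens ! 1) = Poly_Mapping.single (i, j + b, k) 1 - Poly_Mapping.single (i + B, j, k + g) 1"
    by (simp add: gens_def right_diff_distrib mult_single)
  ultimately show ?thesis by simp
qed

lemma I_iter: "Poly_Mapping.single (i, j + t * b, k) (1::'k::comm_ring_1) - Poly_Mapping.single (i + t * B, j, k + t * g) 1 \<in> II"
proof (induction t arbitrary: i k)
  case 0 then show ?case by (simp add: ideal_gen_zero)
next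
  case (Suc t)
  have e: "(i, j + Suc t * b, k) = (i, (j + t * b) + b, k)" "(i + Suc t * B, j, k + Suc t * g) = ((i + B) + t * B, j, (k + g) + t * g)"
    by simp_all
  have s1: "Poly_Mapping.single (i, (j + t * b) + b, k) (1::'k) - Poly_Mapping.single (i + B, j + t * b, k + g) 1 \<in> II"
    by (rule I_step)
  have s2: "Poly_Mapping.single (i + B, j + t * b, k + g) (1::'k) - Poly_Mapping.single ((i + B) + t * B, j, (k + g) + t * g) 1 \<in> II"
    by (rule Suc.IH)
  have "Poly_Mapping.single (i, (j + t * b) + b, k) (1::'k) - Poly_Mapping.single ((i + B) + t * B, j, (k + g) + t * g) 1 \<in> II"
    using ideal_gen_add[OF s1 s2] by simp
  then show ?case by (simp only: e)
qed

lemma I_red: "Poly_Mapping.single m (1::'k::comm_ring_1) - Poly_Mapping.single (red m) 1 \<in> II"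
proof -
  obtain i j k where m: "m = (i, j, k)" by (cases m) auto
  have "Poly_Mapping.single (i, j mod b + (j div b) * b, k) (1::'k) - Poly_Mapping.single (i + (j div b) * B, j mod b, k + (j div b) * g) 1 \<in> II"
    by (rule I_iter)
  moreover have "j mod b + (j div b) * b = j" by simp
  ultimately show ?thesis by (simp add: m red_simp)
qed

lemma I_nonstd:
  assumes "j < b" "\<not> std (i, j, k)"
  shows "Poly_Mapping.single (i, j, k) (1::'k::comm_ring_1) \<in> II"
proof -
  have "a \<le> i \<or> c \<le> k \<or> (p \<le> i \<and> q \<le> j) \<or> (q \<le> j \<and> r \<le> k)" using assms by (auto simp: std_simp)
  then show ?thesis
  proof (elim disjE)
    assume h: "a \<le> i"
    have "Poly_Mapping.single (i - a, j, k) (1::'k) * gens ! 0 \<in> II" by (rule ideal_gen_mult) (rule gen_in, simp)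
    then show ?thesis using h by (simp add: gens_def mult_single)
  next
    assume h: "c \<le> k"
    have "Poly_Mapping.single (i, j, k - c) (1::'k) * gens ! 2 \<in> II" by (rule ideal_gen_mult) (rule gen_in, simp)
    then show ?thesis using h by (simp add: gens_def mult_single)
  next
    assume h: "p \<le> i \<and> q \<le> j"
    have "Poly_Mapping.single (i - p, j - q, k) (1::'k) * gens ! 3 \<in> II" by (rule ideal_gen_mult) (rule gen_in, simp)
    then show ?thesis using h by (simp add: gens_def mult_single)
  next
    assume h: "q \<le> j \<and> r \<le> k"
    have "Poly_Mapping.single (i, j - q, k - r) (1::'k) * gens ! 4 \<in> II" by (rule ideal_gen_mult) (rule gen_in, simp)
    then show ?thesis using h by (simp add: gens_def mult_single)
  qed
qed

lemma I_NF1: "Poly_Mapping.single m (1::'k::comm_ring_1) - NFc m 1 \<in> II"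
proof (cases "std (red m)")
  case True then show ?thesis by (simp add: NFc_def I_red)
next
  case False
  obtain i j k where m: "red m = (i, j, k)" by (cases "red m") auto
  have "j < b" using m bpos by (cases m) (auto simp: red_def split: prod.splits)
  then have "Poly_Mapping.single (red m) (1::'k) \<in> II" using False m I_nonstd by simp
  then have "(Poly_Mapping.single m (1::'k) - Poly_Mapping.single (red m) 1) + Poly_Mapping.single (red m) 1 \<in> II"
    by (intro ideal_gen_add I_red)
  then show ?thesis using False by (simp add: NFc_def)
qed

lemma I_NF: "Poly_Mapping.single m (x::'k::comm_ring_1) - NFc m x \<in> II"
proof -
  have "Poly_Mapping.single 0 x * (Poly_Mapping.single m (1::'k) - NFc m 1) \<in> II"
    by (intro ideal_gen_mult I_NF1)
  moreover have "Poly_Mapping.single 0 x * (Poly_Mapping.single m (1::'k) - NFc m 1) = Poly_Mapping.single m x - NFc m x"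
    by (simp add: right_diff_distrib mult_single NFc_def)
  ultimately show ?thesis by simp
qed

lemma f_Phi: "(f::'k::comm_ring_1 poly3) - Phi f \<in> II"
proof -
  have "f - Phi f = (\<Sum>m\<in>Poly_Mapping.keys f. Poly_Mapping.single m (Poly_Mapping.lookup f m) - NFc m (Poly_Mapping.lookup f m))"
    by (subst (1) pm_expand[of f]) (simp add: Phi_def sum_subtractf)
  also have "\<dots> \<in> II" by (intro ideal_gen_sum I_NF) simp
  finally show ?thesis .
qed

lemma Phi_iff: "Phi (f::'k::comm_ring_1 poly3) = 0 \<longleftrightarrow> f \<in> II"
proof
  assume "Phi f = 0"
  then show "f \<in> II" using f_Phi[of f] by simp
next
  assume "f \<in> II" then show "Phi f = 0" by (rule Phi_I)
qed

lemma mdeg_red: "mdeg (red m) = mdeg m"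
proof -
  obtain i j k where m: "m = (i, j, k)" by (cases m) auto
  have "j div b * B + j mod b + j div b * g = j div b * b + j mod b" using hb by (simp add: algebra_simps)
  also have "\<dots> = j" by simp
  finally show ?thesis by (simp add: m red_simp mdeg_simp)
qed

lemma keys_Phi: "m \<in> Poly_Mapping.keys (Phi f) \<Longrightarrow> std m \<and> (\<exists>m'\<in>Poly_Mapping.keys f. red m' = m)"
proof -
  assume "m \<in> Poly_Mapping.keys (Phi f)"
  then have "m \<in> (\<Union>m'\<in>Poly_Mapping.keys f. Poly_Mapping.keys (NFc m' (Poly_Mapping.lookup f m')))"
    unfolding Phi_def by (rule subsetD[OF keys_sum])
  then obtain m' where "m' \<in> Poly_Mapping.keys f" "m \<in> Poly_Mapping.keys (NFc m' (Poly_Mapping.lookup f m'))" by blast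
  then show ?thesis by (auto simp: NFc_def split: if_splits)
qed

lemma Phi_homog: "f \<in> homog d \<Longrightarrow> Phi f \<in> homog d"
  unfolding homog_def
proof (intro CollectI ballI)
  fix m assume f: "f \<in> {f. \<forall>m\<in>Poly_Mapping.keys f. mdeg m = d}" and m: "m \<in> Poly_Mapping.keys (Phi f)"
  then obtain m' where "m' \<in> Poly_Mapping.keys f" "red m' = m" using keys_Phi by blast
  moreover have "mdeg m' = d" using f \<open>m' \<in> Poly_Mapping.keys f\<close> by blast
  ultimately show "mdeg m = d" using mdeg_red[of m'] by simp
qed

lemma Phi_L: "Phi (L * f) = Phi (L * Phi (f::'k::comm_ring_1 poly3))"
proof -
  have "L * (f - Phi f) \<in> II" by (intro ideal_gen_mult f_Phi)
  then have "L * f - L * Phi f \<in> II" by (simp add: right_diff_distrib)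
  then have "Phi (L * f - L * Phi f) = 0" by (rule Phi_I)
  then show ?thesis by (simp add: Phi_diff)
qed

end


lemma divmod_eq: "(jj::nat) < b \<Longrightarrow> (b * tt + jj) mod b = jj \<and> (b * tt + jj) div b = tt"
  by simp

context wlp
begin

definition cell :: "nat \<Rightarrow> nat \<Rightarrow> nat \<Rightarrow> nat \<times> nat \<times> nat" where
  "cell d k0 J = (d - (J mod b + (k0 + g * (J div b))), J mod b, k0 + g * (J div b))"
definition valid :: "nat \<Rightarrow> nat \<Rightarrow> nat \<Rightarrow> bool" where
  "valid d k0 J \<longleftrightarrow> J mod b + (k0 + g * (J div b)) \<le> d"
definition src :: "nat \<Rightarrow> nat \<Rightarrow> nat \<Rightarrow> bool" where
  "src d k0 J \<longleftrightarrow> valid d k0 J \<and> std (cell d k0 J)"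
definition Tm :: "nat \<Rightarrow> nat \<Rightarrow> nat \<Rightarrow> 'k::comm_ring_1 \<Rightarrow> 'k poly3" where
  "Tm d k0 J x = (if src (Suc d) k0 J then Poly_Mapping.single (cell (Suc d) k0 J) x else 0)"

abbreviation Lp :: "'k::comm_ring_1 poly3" where
  "Lp \<equiv> Poly_Mapping.single (1, 0, 0) 1 + Poly_Mapping.single (0, 1, 0) 1"

lemma Phi_L_single: "Phi (Lp * Poly_Mapping.single m x) = NFc ((1, 0, 0) + m) x + NFc ((0, 1, 0) + m) x"
  by (simp add: distrib_right mult_single Phi_add Phi_single)

lemma cell_mdeg: "valid d k0 J \<Longrightarrow> mdeg (cell d k0 J) = d"
  by (simp add: cell_def valid_def mdeg_simp)

lemma red_Suc: "j < b \<Longrightarrow> red (i, Suc j, k) = (if Suc j < b then (i, Suc j, k) else (i + B, 0, k + g))"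
proof -
  assume j: "j < b"
  show ?thesis
  proof (cases "Suc j < b")
    case True then show ?thesis by (simp add: red_simp)
  next
    case False
    then have "Suc j = b" using j by simp
    then show ?thesis using False by (simp add: red_simp)
  qed
qed

lemma Suc_divmod1: "Suc (J mod b) < b \<Longrightarrow> Suc J mod b = Suc (J mod b) \<and> Suc J div b = J div b"
  by (simp add: mod_Suc div_Suc)
lemma Suc_divmod2: "Suc (J mod b) = b \<Longrightarrow> Suc J mod b = 0 \<and> Suc J div b = Suc (J div b)"
  by (simp add: mod_Suc div_Suc)

lemma Phi_L_cell:
  assumes "src d k0 J"
  shows "Phi (Lp * Poly_Mapping.single (cell d k0 J) x) = Tm d k0 J x + Tm d k0 (Suc J) (x::'k::comm_ring_1)"
proof -
  define j where "j = J mod b"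
  define t where "t = J div b"
  define K where "K = k0 + g * t"
  have jb: "j < b" unfolding j_def using bpos by simp
  have v: "j + K \<le> d" using assms unfolding src_def valid_def j_def t_def K_def by simp
  have c: "cell d k0 J = (d - (j + K), j, K)" unfolding cell_def j_def t_def K_def by simp
  have cS: "cell (Suc d) k0 J = (Suc d - (j + K), j, K)" unfolding cell_def j_def t_def K_def by simp
  have c1: "(1, 0, 0) + cell d k0 J = cell (Suc d) k0 J"
    using v unfolding c cS by (simp add: Suc_diff_le)
  have v1: "valid (Suc d) k0 J" using v unfolding valid_def j_def t_def K_def by simp
  have r1: "red (cell (Suc d) k0 J) = cell (Suc d) k0 J"
    by (simp add: cell_def red_std bpos)
  have e1: "NFc ((1, 0, 0) + cell d k0 J) x = Tm d k0 J x"
    unfolding c1 by (simp add: r1 NFc_def Tm_def src_def v1)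
  have e2: "NFc ((0, 1, 0) + cell d k0 J) x = Tm d k0 (Suc J) x"
  proof (cases "Suc j < b")
    case True
    have dm: "Suc J mod b = Suc j" "Suc J div b = t" using Suc_divmod1[of J] True unfolding j_def t_def by auto
    have "(0, 1, 0) + cell d k0 J = (d - (j + K), Suc j, K)" unfolding c by simp
    moreover have "red (d - (j + K), Suc j, K) = (d - (j + K), Suc j, K)" using True by (simp add: red_std)
    moreover have "cell (Suc d) k0 (Suc J) = (d - (j + K), Suc j, K)" by (simp add: cell_def dm K_def)
    moreover have "valid (Suc d) k0 (Suc J)" using v by (simp add: valid_def dm K_def)
    ultimately show ?thesis by (simp add: NFc_def Tm_def src_def)
  next
    case False
    then have jj: "Suc j = b" using jb by simp
    have dm: "Suc J mod b = 0" "Suc J div b = Suc t" using Suc_divmod2[of J] jj unfolding j_def t_def by auto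
    have "(0, 1, 0) + cell d k0 J = (d - (j + K), Suc j, K)" unfolding c by simp
    moreover have "red (d - (j + K), Suc j, K) = (d - (j + K) + B, 0, K + g)" using red_Suc[OF jb] False by simp
    moreover have "cell (Suc d) k0 (Suc J) = (Suc d - (K + g), 0, K + g)" by (simp add: cell_def dm K_def algebra_simps)
    moreover have "d - (j + K) + B = Suc d - (K + g)" using v jj hb by simp
    moreover have "k0 + g * Suc t \<le> Suc d" using v jj hb hB unfolding K_def by simp
    then have "valid (Suc d) k0 (Suc J)" by (simp add: valid_def dm)
    ultimately show ?thesis by (simp add: NFc_def Tm_def src_def)
  qed
  show ?thesis unfolding Phi_L_single e1 e2 by (rule refl)
qed

lemma Tm_uminus: "Tm d k0 J (- x) = - Tm d k0 J x"
  by (simp add: Tm_def single_uminus)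

lemma tele:
  assumes "\<forall>J. K \<le> J \<and> J < K + N \<longrightarrow> src d k0 J"
  shows "\<exists>v \<in> homog d. Phi (Lp * v) = Tm d k0 K x - Tm d k0 (K + N) ((-1) ^ N * (x::'k::comm_ring_1))"
  using assms
proof (induction N arbitrary: K x)
  case 0
  show ?case by (rule bexI[of _ 0]) (simp_all add: homog_zero)
next
  case (Suc N)
  have "\<forall>J. Suc K \<le> J \<and> J < Suc K + N \<longrightarrow> src d k0 J" using Suc.prems by auto
  then obtain v1 where v1: "v1 \<in> homog d" "Phi (Lp * v1) = Tm d k0 (Suc K) (- x) - Tm d k0 (Suc K + N) ((-1) ^ N * (- x))"
    using Suc.IH by blast
  have sK: "src d k0 K" using Suc.prems by auto
  let ?v = "Poly_Mapping.single (cell d k0 K) x + v1"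
  have "?v \<in> homog d"
    using sK v1(1) by (intro homog_add homog_single) (simp_all add: src_def cell_mdeg)
  moreover have "Phi (Lp * ?v) = Tm d k0 K x - Tm d k0 (K + Suc N) ((-1) ^ Suc N * x)"
    using v1(2) Phi_L_cell[OF sK, of x] by (simp add: distrib_left Phi_add Tm_uminus)
  ultimately show ?case by blast
qed

lemma cell_of:
  assumes "std (i, j, k)"
  shows "valid (i + j + k) (k mod g) (b * (k div g) + j) \<and> cell (i + j + k) (k mod g) (b * (k div g) + j) = (i, j, k)"
proof -
  have jb: "j < b" using assms by (simp add: std_simp)
  have dm: "(b * (k div g) + j) mod b = j" "(b * (k div g) + j) div b = k div g" using divmod_eq[OF jb] by auto
  have kk: "k mod g + g * (k div g) = k" by simp
  show ?thesis using jb by (simp add: valid_def cell_def dm kk)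
qed

lemma src_bound: "src d k0 J \<Longrightarrow> J < b * Suc d"
proof -
  assume "src d k0 J"
  then have "g * (J div b) \<le> d" by (simp add: src_def valid_def)
  moreover have "J div b \<le> g * (J div b)" using hg by simp
  ultimately have "J div b \<le> d" by linarith
  then have "b * (J div b) + b \<le> b * Suc d" by simp
  moreover have "J < b * (J div b) + b" using bpos
    by (metis add_less_cancel_left div_mult_mod_eq mod_less_divisor mult.commute)
  ultimately show ?thesis by linarith
qed

end


lemma sum_keys_delta:
  "(\<Sum>m\<in>Poly_Mapping.keys v. if m = m0 \<and> P then Poly_Mapping.lookup v m else 0) = (if P then Poly_Mapping.lookup v m0 else 0)"
proof (cases P)
  case True
  then have "(\<Sum>m\<in>Poly_Mapping.keys v. if m = m0 \<and> P then Poly_Mapping.lookup v m else 0)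
      = (\<Sum>m\<in>Poly_Mapping.keys v. if m = m0 then Poly_Mapping.lookup v m else 0)" by simp
  also have "\<dots> = (if m0 \<in> Poly_Mapping.keys v then Poly_Mapping.lookup v m0 else 0)" by (simp add: sum.delta)
  also have "\<dots> = Poly_Mapping.lookup v m0" by (simp add: in_keys_iff)
  finally show ?thesis using True by simp
qed simp

context wlp
begin

lemma LF:
  fixes v :: "'k::comm_ring_1 poly3"
  assumes kv: "\<forall>m\<in>Poly_Mapping.keys v. std m" and st: "std (ti, tj, tk)"
  shows "Poly_Mapping.lookup (Phi (Lp * v)) (ti, tj, tk) =
    (if 1 \<le> ti then Poly_Mapping.lookup v (ti - 1, tj, tk) else 0) +
    (if 1 \<le> tj then Poly_Mapping.lookup v (ti, tj - 1, tk)
     else if B \<le> ti \<and> g \<le> tk then Poly_Mapping.lookup v (ti - B, b - 1, tk - g) else 0)"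
proof -
  let ?t = "(ti, tj, tk)"
  have tjb: "tj < b" using st by (simp add: std_simp)
  have "Lp * v = (\<Sum>m\<in>Poly_Mapping.keys v. Lp * Poly_Mapping.single m (Poly_Mapping.lookup v m))"
    by (subst (1) pm_expand[of v]) (simp add: sum_distrib_left)
  then have "Phi (Lp * v) = (\<Sum>m\<in>Poly_Mapping.keys v. NFc ((1, 0, 0) + m) (Poly_Mapping.lookup v m) + NFc ((0, 1, 0) + m) (Poly_Mapping.lookup v m))"
    by (simp only: Phi_sum finite_keys Phi_L_single)
  then have L: "Poly_Mapping.lookup (Phi (Lp * v)) ?t =
      (\<Sum>m\<in>Poly_Mapping.keys v. Poly_Mapping.lookup (NFc ((1, 0, 0) + m) (Poly_Mapping.lookup v m)) ?t)
    + (\<Sum>m\<in>Poly_Mapping.keys v. Poly_Mapping.lookup (NFc ((0, 1, 0) + m) (Poly_Mapping.lookup v m)) ?t)"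
    by (simp add: lookup_sum lookup_add sum.distrib)
  have X: "Poly_Mapping.lookup (NFc ((1, 0, 0) + m) (Poly_Mapping.lookup v m)) ?t
      = (if m = (ti - 1, tj, tk) \<and> 1 \<le> ti then Poly_Mapping.lookup v m else 0)" if m: "m \<in> Poly_Mapping.keys v" for m
  proof -
    obtain i j k where mm: "m = (i, j, k)" by (cases m) auto
    have jb: "j < b" using kv m mm by (auto simp: std_simp)
    have e: "(1, 0, 0) + m = (Suc i, j, k)" by (simp add: mm)
    have r: "red (Suc i, j, k) = (Suc i, j, k)" using jb by (rule red_std)
    have iff: "((Suc i, j, k) = ?t) \<longleftrightarrow> (m = (ti - 1, tj, tk) \<and> 1 \<le> ti)" by (auto simp: mm)
    show ?thesis unfolding e NFc_def r using st iff by (auto simp: lookup_single when_def)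
  qed
  have Y: "Poly_Mapping.lookup (NFc ((0, 1, 0) + m) (Poly_Mapping.lookup v m)) ?t
      = (if m = (if 1 \<le> tj then (ti, tj - 1, tk) else (ti - B, b - 1, tk - g)) \<and> (1 \<le> tj \<or> (B \<le> ti \<and> g \<le> tk))
         then Poly_Mapping.lookup v m else 0)" if m: "m \<in> Poly_Mapping.keys v" for m
  proof -
    obtain i j k where mm: "m = (i, j, k)" by (cases m) auto
    have jb: "j < b" using kv m mm by (auto simp: std_simp)
    have e: "(0, 1, 0) + m = (i, Suc j, k)" by (simp add: mm)
    have iff: "(red (i, Suc j, k) = ?t) \<longleftrightarrow> (m = (if 1 \<le> tj then (ti, tj - 1, tk) else (ti - B, b - 1, tk - g)) \<and> (1 \<le> tj \<or> (B \<le> ti \<and> g \<le> tk)))"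
    proof (cases "Suc j < b")
      case True
      then show ?thesis using red_Suc[OF jb, of i k] by (auto simp: mm)
    next
      case False
      then have jj: "Suc j = b" using jb by simp
      then show ?thesis using red_Suc[OF jb, of i k] tjb by (auto simp: mm)
    qed
    show ?thesis unfolding e NFc_def using st iff by (auto simp: lookup_single when_def)
  qed
  have SX: "(\<Sum>m\<in>Poly_Mapping.keys v. Poly_Mapping.lookup (NFc ((1, 0, 0) + m) (Poly_Mapping.lookup v m)) ?t)
      = (if 1 \<le> ti then Poly_Mapping.lookup v (ti - 1, tj, tk) else 0)"
    using X by (simp add: sum_keys_delta cong: sum.cong)
  have SY: "(\<Sum>m\<in>Poly_Mapping.keys v. Poly_Mapping.lookup (NFc ((0, 1, 0) + m) (Poly_Mapping.lookup v m)) ?t)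
      = (if 1 \<le> tj \<or> (B \<le> ti \<and> g \<le> tk) then Poly_Mapping.lookup v (if 1 \<le> tj then (ti, tj - 1, tk) else (ti - B, b - 1, tk - g)) else 0)"
    using Y by (simp add: sum_keys_delta cong: sum.cong)
  show ?thesis unfolding L SX SY by auto
qed

end


context wlp
begin

definition W :: "'k::comm_ring_1 poly3 \<Rightarrow> nat \<Rightarrow> nat \<Rightarrow> nat \<Rightarrow> 'k" where
  "W v d k0 J = (if valid d k0 J then Poly_Mapping.lookup v (cell d k0 J) else 0)"

lemma trans:
  fixes v :: "'k::comm_ring_1 poly3"
  assumes k0: "k0 < g" and s: "src (Suc d) k0 J" and kv: "\<forall>m\<in>Poly_Mapping.keys v. std m"
  shows "Poly_Mapping.lookup (Phi (Lp * v)) (cell (Suc d) k0 J) = W v d k0 J + (if 0 < J then W v d k0 (J - 1) else 0)"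
proof -
  define j where "j = J mod b"
  define t where "t = J div b"
  define K where "K = k0 + g * t"
  have Jeq: "J = b * t + j" unfolding j_def t_def by simp
  have jb: "j < b" unfolding j_def using bpos by simp
  have vS: "j + K \<le> Suc d" using s unfolding src_def valid_def j_def t_def K_def by simp
  have cS: "cell (Suc d) k0 J = (Suc d - (j + K), j, K)" unfolding cell_def j_def t_def K_def by simp
  have stS: "std (Suc d - (j + K), j, K)" using s cS by (simp add: src_def)
  have LFa: "Poly_Mapping.lookup (Phi (Lp * v)) (cell (Suc d) k0 J) =
    (if 1 \<le> Suc d - (j + K) then Poly_Mapping.lookup v (Suc d - (j + K) - 1, j, K) else 0) +
    (if 1 \<le> j then Poly_Mapping.lookup v (Suc d - (j + K), j - 1, K)
     else if B \<le> Suc d - (j + K) \<and> g \<le> K then Poly_Mapping.lookup v (Suc d - (j + K) - B, b - 1, K - g) else 0)"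
    unfolding cS by (rule LF[OF kv stS])
  have Xp: "(if 1 \<le> Suc d - (j + K) then Poly_Mapping.lookup v (Suc d - (j + K) - 1, j, K) else 0) = W v d k0 J"
  proof -
    have "valid d k0 J \<longleftrightarrow> 1 \<le> Suc d - (j + K)" unfolding valid_def j_def t_def K_def by auto
    moreover have "cell d k0 J = (Suc d - (j + K) - 1, j, K)" unfolding cell_def j_def t_def K_def by simp
    ultimately show ?thesis by (simp add: W_def)
  qed
  have Yp: "(if 1 \<le> j then Poly_Mapping.lookup v (Suc d - (j + K), j - 1, K)
     else if B \<le> Suc d - (j + K) \<and> g \<le> K then Poly_Mapping.lookup v (Suc d - (j + K) - B, b - 1, K - g) else 0)
     = (if 0 < J then W v d k0 (J - 1) else 0)"
  proof (cases "1 \<le> j")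
    case True
    have J1: "J - 1 = b * t + (j - 1)" using Jeq True by simp
    have dm: "(J - 1) mod b = j - 1" "(J - 1) div b = t" unfolding J1 using divmod_eq[of "j - 1" b t] jb by auto
    have "valid d k0 (J - 1)" using vS True unfolding valid_def dm K_def by simp
    moreover have "cell d k0 (J - 1) = (Suc d - (j + K), j - 1, K)" using True vS unfolding cell_def dm K_def by simp
    moreover have "0 < J" using Jeq True by simp
    ultimately show ?thesis using True by (simp add: W_def)
  next
    case False
    then have j0: "j = 0" by simp
    show ?thesis
    proof (cases "t = 0")
      case True
      then have "J = 0" "K = k0" using Jeq j0 K_def by simp_all
      then show ?thesis using j0 k0 by simp
    next
      case False
      then obtain t' where t': "t = Suc t'" by (cases t) auto
      have J1: "J - 1 = b * t' + (b - 1)" using Jeq j0 t' bpos by (simp add: algebra_simps)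
      have dm: "(J - 1) mod b = b - 1" "(J - 1) div b = t'" unfolding J1 using divmod_eq[of "b - 1" b t'] bpos by auto
      have Kg: "K = k0 + g * t' + g" unfolding K_def t' by simp
      have vv: "valid d k0 (J - 1) \<longleftrightarrow> B \<le> Suc d - (j + K)"
        unfolding valid_def dm using j0 Kg hb hB by auto
      have pos: "0 < J" "g \<le> K" using Jeq t' bpos Kg by simp_all
      show ?thesis
      proof (cases "valid d k0 (J - 1)")
        case True
        then have vl: "b - 1 + (k0 + g * t') \<le> d" unfolding valid_def dm by simp
        have "d - (b - 1 + (k0 + g * t')) = Suc d - (j + K) - B" using vl j0 Kg hb hB by simp
        then have "cell d k0 (J - 1) = (Suc d - (j + K) - B, b - 1, K - g)"
          unfolding cell_def dm using Kg by simp
        then show ?thesis using True vv j0 pos by (simp add: W_def)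
      next
        case False
        then show ?thesis using vv j0 pos by (simp add: W_def)
      qed
    qed
  qed
  show ?thesis unfolding LFa Xp Yp by (rule refl)
qed

lemma NoSS:
  assumes small: "2 * d + 3 < a + q + c"
    and J12: "J1 \<le> J2" and s1: "src d k0 J1" and t1: "\<not> src (Suc d) k0 J1"
    and all: "\<forall>J. J1 \<le> J \<and> J \<le> J2 \<longrightarrow> src d k0 J" and t2: "\<not> src (Suc d) k0 (Suc J2)"
  shows False
proof -
  have bd: "d < b - 1" using small h2 by linarith
  define u1 where "u1 = J1 div b"
  define u2 where "u2 = J2 div b"
  have u12: "u1 \<le> u2" unfolding u1_def u2_def using J12 by (rule div_le_mono)
  show False
  proof (cases "u1 < u2")
    case True
    define J' where "J' = b * u1 + (b - 1)"
    have "J1 = b * u1 + J1 mod b" unfolding u1_def by simp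
    moreover have "J1 mod b \<le> b - 1" using bpos by (simp add: less_Suc_eq_le[symmetric])
    ultimately have "J1 \<le> J'" unfolding J'_def by linarith
    moreover have "J' \<le> J2"
    proof -
      have "Suc u1 \<le> u2" using True by simp
      then have "b * Suc u1 \<le> b * u2" by (rule mult_le_mono2)
      moreover have "b * u2 \<le> J2" unfolding u2_def by (simp add: times_div_less_eq_dividend)
      ultimately show ?thesis unfolding J'_def using bpos by simp
    qed
    ultimately have "src d k0 J'" using all by blast
    then have "valid d k0 J'" by (simp add: src_def)
    moreover have "J' mod b = b - 1" unfolding J'_def using divmod_eq[of "b - 1" b u1] bpos by simp
    ultimately have "b - 1 \<le> d" by (simp add: valid_def)
    then show False using bd by simp
  next
    case False
    then have ueq: "u1 = u2" using u12 by simp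
    define j1 where "j1 = J1 mod b"
    define j2 where "j2 = J2 mod b"
    define K where "K = k0 + g * u1"
    have J1eq: "J1 = b * u1 + j1" unfolding j1_def u1_def by simp
    have J2eq: "J2 = b * u1 + j2" unfolding j2_def u2_def ueq by simp
    have j1b: "j1 < b" "j2 < b" unfolding j1_def j2_def using bpos by simp_all
    have j12: "j1 \<le> j2" using J12 J1eq J2eq by simp
    have s2: "src d k0 J2" using all J12 by simp
    have v2: "j2 + K \<le> d" using s2 unfolding src_def valid_def j2_def K_def u2_def ueq by simp
    have st2: "std (d - (j2 + K), j2, K)" using s2 unfolding src_def cell_def j2_def K_def u2_def ueq by simp
    show False
    proof (cases "Suc j2 < b")
      case False
      then have "b - 1 \<le> d" using v2 j1b by simp
      then show False using bd by simp
    next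
      case True
      have dm: "Suc J2 mod b = Suc j2" "Suc J2 div b = u1" using Suc_divmod1[of J2] True unfolding j2_def u2_def ueq by auto
      have "valid (Suc d) k0 (Suc J2)" using v2 unfolding valid_def dm K_def by simp
      then have "\<not> std (Suc d - (Suc j2 + K), Suc j2, K)" using t2 unfolding src_def cell_def dm K_def by simp
      moreover have "Suc d - (Suc j2 + K) = d - (j2 + K)" by simp
      ultimately have nst: "\<not> std (d - (j2 + K), Suc j2, K)" by simp
      have "j2 < q" using st2 nst True by (auto simp: std_simp)
      have v1: "j1 + K \<le> d" using s1 unfolding src_def valid_def j1_def K_def u1_def by simp
      have st1: "std (d - (j1 + K), j1, K)" using s1 unfolding src_def cell_def j1_def K_def u1_def by simp
      have "valid (Suc d) k0 J1" using v1 unfolding valid_def j1_def K_def u1_def by simp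
      then have "\<not> std (Suc d - (j1 + K), j1, K)" using t1 unfolding src_def cell_def j1_def K_def u1_def by simp
      moreover have "Suc d - (j1 + K) = Suc (d - (j1 + K))" using v1 by simp
      ultimately have nst1: "\<not> std (Suc (d - (j1 + K)), j1, K)" by simp
      have "j1 < q" using j12 \<open>j2 < q\<close> by simp
      then have "a \<le> Suc (d - (j1 + K))" using st1 nst1 by (auto simp: std_simp)
      then have "a \<le> Suc d" using v1 by simp
      then show False using small h1 by linarith
    qed
  qed
qed

end


lemma neg_one_sq: "((-1::'k::comm_ring_1) ^ N) * ((-1) ^ N) = 1"
  by (induction N) (simp_all add: algebra_simps)

lemma keys_nonempty: "(v :: 'a \<Rightarrow>\<^sub>0 'b::zero) \<noteq> 0 \<Longrightarrow> \<exists>m. m \<in> Poly_Mapping.keys v"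
proof (rule ccontr)
  assume "v \<noteq> 0" "\<not> (\<exists>m. m \<in> Poly_Mapping.keys v)"
  then have "\<And>k. Poly_Mapping.lookup v k = Poly_Mapping.lookup 0 k" by (simp add: in_keys_iff)
  then have "v = 0" by (rule poly_mapping_eqI)
  then show False using \<open>v \<noteq> 0\<close> by simp
qed

context wlp
begin

lemma NoTT:
  assumes big: "a + q + c \<le> 2 * d + 3" and J12: "J1 \<le> J2" and s1: "src (Suc d) k0 J1"
    and left: "J1 = 0 \<or> \<not> src d k0 (J1 - 1)" and allt: "\<forall>J. J1 \<le> J \<and> J \<le> J2 \<longrightarrow> src (Suc d) k0 J"
    and alls: "\<forall>J. J1 \<le> J \<and> J < J2 \<longrightarrow> src d k0 J" and ns2: "\<not> src d k0 J2"
  shows False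
proof -
  define u1 where "u1 = J1 div b"
  define j1 where "j1 = J1 mod b"
  define K1 where "K1 = k0 + g * u1"
  have J1eq: "J1 = b * u1 + j1" unfolding j1_def u1_def by simp
  have j1b: "j1 < b" unfolding j1_def using bpos by simp
  have v1: "j1 + K1 \<le> Suc d" using s1 unfolding src_def valid_def j1_def K1_def u1_def by simp
  have st1: "std (Suc d - (j1 + K1), j1, K1)" using s1 unfolding src_def cell_def j1_def K1_def u1_def by simp
  have j10: "j1 = 0"
  proof (rule ccontr)
    assume "j1 \<noteq> 0"
    then have J1m: "J1 - 1 = b * u1 + (j1 - 1)" using J1eq by simp
    have dm: "(J1 - 1) mod b = j1 - 1" "(J1 - 1) div b = u1" unfolding J1m using divmod_eq[of "j1 - 1" b u1] j1b by auto
    have "valid d k0 (J1 - 1)" using v1 \<open>j1 \<noteq> 0\<close> unfolding valid_def dm K1_def[symmetric] by simp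
    moreover have "cell d k0 (J1 - 1) = (Suc d - (j1 + K1), j1 - 1, K1)"
      using v1 \<open>j1 \<noteq> 0\<close> unfolding cell_def dm K1_def[symmetric] by simp
    moreover have "std (Suc d - (j1 + K1), j1 - 1, K1)" using st1 by (auto simp: std_simp)
    ultimately have "src d k0 (J1 - 1)" by (simp add: src_def)
    moreover have "J1 \<noteq> 0" using J1eq \<open>j1 \<noteq> 0\<close> by simp
    ultimately show False using left by simp
  qed
  define u2 where "u2 = J2 div b"
  define j2 where "j2 = J2 mod b"
  define K2 where "K2 = k0 + g * u2"
  have J2eq: "J2 = b * u2 + j2" unfolding j2_def u2_def by simp
  have s2: "src (Suc d) k0 J2" using allt J12 by simp
  have v2: "j2 + K2 \<le> Suc d" using s2 unfolding src_def valid_def j2_def K2_def u2_def by simp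
  have st2: "std (Suc d - (j2 + K2), j2, K2)" using s2 unfolding src_def cell_def j2_def K2_def u2_def by simp
  have e2: "j2 + K2 = Suc d"
  proof (rule ccontr)
    assume "j2 + K2 \<noteq> Suc d"
    then have vd: "j2 + K2 \<le> d" using v2 by simp
    then have "valid d k0 J2" unfolding valid_def j2_def K2_def u2_def by simp
    moreover have "cell d k0 J2 = (d - (j2 + K2), j2, K2)" unfolding cell_def j2_def K2_def u2_def by simp
    moreover have "std (d - (j2 + K2), j2, K2)" using st2 vd by (auto simp: std_simp)
    ultimately have "src d k0 J2" by (simp add: src_def)
    then show False using ns2 by simp
  qed
  have u12: "u1 \<le> u2" unfolding u1_def u2_def using J12 by (rule div_le_mono)
  show False
  proof (cases "u1 < u2")
    case False
    then have ueq: "u2 = u1" using u12 by simp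
    then have KK: "K2 = K1" unfolding K1_def K2_def by simp
    have Kc: "K1 < c" using st1 by (simp add: std_simp)
    show False
    proof (cases "j2 < q")
      case True
      then show False using e2 KK Kc big h1 by linarith
    next
      case False
      define J' where "J' = b * u1 + q"
      have "J1 \<le> J'" "J' \<le> J2" unfolding J'_def using J1eq J2eq j10 ueq False by simp_all
      then have sJ: "src (Suc d) k0 J'" using allt by blast
      have dm: "J' mod b = q" "J' div b = u1" unfolding J'_def using divmod_eq[of q b u1] hqb by auto
      have vJ: "q + K1 \<le> Suc d" using sJ unfolding src_def valid_def dm K1_def by simp
      have "std (Suc d - (q + K1), q, K1)" using sJ unfolding src_def cell_def dm K1_def by simp
      then have "Suc d - (q + K1) < p" "K1 < r" by (auto simp: std_simp)
      then show False using vJ big h2 ha hb hc by linarith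
    qed
  next
    case True
    define J' where "J' = b * u1 + (b - 1)"
    have "b * Suc u1 \<le> b * u2" using True by (intro mult_le_mono2) simp
    then have "J1 \<le> J'" "J' < J2" unfolding J'_def using J1eq J2eq j10 bpos by simp_all
    then have sJ: "src d k0 J'" using alls by blast
    have dm: "J' mod b = b - 1" "J' div b = u1" unfolding J'_def using divmod_eq[of "b - 1" b u1] bpos by auto
    have vJ: "b - 1 + K1 \<le> d" using sJ unfolding src_def valid_def dm K1_def by simp
    define J'' where "J'' = b * u1 + q"
    have "J1 \<le> J''" "J'' \<le> J2" unfolding J''_def using J1eq J2eq j10 \<open>b * Suc u1 \<le> b * u2\<close> hqb by simp_all
    then have sJ2: "src (Suc d) k0 J''" using allt by blast
    have dm2: "J'' mod b = q" "J'' div b = u1" unfolding J''_def using divmod_eq[of q b u1] hqb by auto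
    have vJ2: "q + K1 \<le> Suc d" using sJ2 unfolding src_def valid_def dm2 K1_def by simp
    have "std (Suc d - (q + K1), q, K1)" using sJ2 unfolding src_def cell_def dm2 K1_def by simp
    then have "Suc d - (q + K1) < p" by (auto simp: std_simp)
    then show False using vJ vJ2 h3 bpos by linarith
  qed
qed

end


context wlp
begin

lemma Lp_homog: "(Lp :: 'k::comm_ring_1 poly3) \<in> homog 1"
  by (intro homog_add homog_single) (simp_all add: mdeg_simp)

lemma inj_case:
  assumes small: "2 * d + 3 < a + q + c"
  shows "mult_inj (ideal_gen gens) (Lp :: 'k::comm_ring_1 poly3) d"
  unfolding mult_inj_def
proof (intro ballI impI)
  fix f :: "'k poly3" assume f: "f \<in> homog d" and Lf: "Lp * f \<in> ideal_gen gens"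
  define v where "v = Phi f"
  have kv: "\<forall>m\<in>Poly_Mapping.keys v. std m" unfolding v_def using keys_Phi by blast
  have hv: "v \<in> homog d" unfolding v_def using f by (rule Phi_homog)
  have z: "Phi (Lp * v) = 0" unfolding v_def using Phi_L[of Lp f] Phi_I[OF Lf] by simp
  have "v = 0"
  proof (rule ccontr)
    assume "v \<noteq> 0"
    then obtain m where m: "m \<in> Poly_Mapping.keys v" using keys_nonempty by blast
    obtain i j k where mm: "m = (i, j, k)" by (cases m) auto
    have stm: "std (i, j, k)" using kv m mm by simp
    have "mdeg m = d" using hv m unfolding homog_def by blast
    then have md: "i + j + k = d" using mm by (simp add: mdeg_simp)
    define k0 where "k0 = k mod g"
    define J where "J = b * (k div g) + j"
    have co: "valid d k0 J" "cell d k0 J = m" using cell_of[OF stm] md mm unfolding k0_def J_def by auto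
    have k0g: "k0 < g" unfolding k0_def using hg by simp
    have "W v d k0 J = 0"
    proof (rule inj1d[where src = "src d k0" and tgt = "src (Suc d) k0" and N = "b * Suc d"])
      fix J' assume "W v d k0 J' \<noteq> 0"
      then have "valid d k0 J'" "cell d k0 J' \<in> Poly_Mapping.keys v" by (auto simp: W_def in_keys_iff split: if_splits)
      then show "src d k0 J'" using kv by (simp add: src_def)
    next
      fix J' assume "src (Suc d) k0 J'"
      then have "Poly_Mapping.lookup (Phi (Lp * v)) (cell (Suc d) k0 J') = W v d k0 J' + (if 0 < J' then W v d k0 (J' - 1) else 0)"
        using trans[OF k0g _ kv] by blast
      then show "W v d k0 J' + (if 0 < J' then W v d k0 (J' - 1) else 0) = 0" using z by simp
    next
      fix J' assume "src d k0 J'" then show "J' < b * Suc d" by (rule src_bound)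
    next
      fix J1 J2 assume "J1 \<le> J2" "src d k0 J1" "\<not> src (Suc d) k0 J1"
        "\<forall>J. J1 \<le> J \<and> J \<le> J2 \<longrightarrow> src d k0 J" "\<not> src (Suc d) k0 (Suc J2)"
      then show False using NoSS[OF small] by blast
    qed
    moreover have "W v d k0 J = Poly_Mapping.lookup v m" using co by (simp add: W_def)
    ultimately show False using m by (simp add: in_keys_iff)
  qed
  then have "Phi f = 0" unfolding v_def .
  then show "f \<in> ideal_gen gens" using Phi_iff by blast
qed

lemma surj_one:
  assumes big: "a + q + c \<le> 2 * d + 3" and st: "std t" and md: "mdeg t = Suc d"
  shows "\<exists>v\<in>homog d. Phi (Lp * v) = Poly_Mapping.single t (y::'k::comm_ring_1)"
proof -
  obtain i j k where tt: "t = (i, j, k)" by (cases t) auto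
  have stt: "std (i, j, k)" using st tt by simp
  have mdd: "i + j + k = Suc d" using md tt by (simp add: mdeg_simp)
  define k0 where "k0 = k mod g"
  define J0 where "J0 = b * (k div g) + j"
  have co: "valid (Suc d) k0 J0" "cell (Suc d) k0 J0 = t" using cell_of[OF stt] mdd tt unfolding k0_def J0_def by auto
  have s0: "src (Suc d) k0 J0" using co st by (simp add: src_def)
  have T0: "Tm d k0 J0 y = Poly_Mapping.single t y" using s0 co by (simp add: Tm_def)
  have "(\<exists>J'<J0. \<not> src (Suc d) k0 J' \<and> (\<forall>J. J' \<le> J \<and> J < J0 \<longrightarrow> src d k0 J)) \<or>
        (\<exists>J''\<ge>J0. \<not> src (Suc d) k0 (Suc J'') \<and> (\<forall>J. J0 \<le> J \<and> J \<le> J'' \<longrightarrow> src d k0 J))"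
  proof (rule surj1d[where N = "b * Suc d"])
    show "src (Suc d) k0 J0" by (rule s0)
  next
    fix J assume "src d k0 J" then show "J < b * Suc d" by (rule src_bound)
  next
    fix J1 J2 assume "J1 \<le> J2" "src (Suc d) k0 J1" "J1 = 0 \<or> \<not> src d k0 (J1 - 1)"
      "\<forall>J. J1 \<le> J \<and> J \<le> J2 \<longrightarrow> src (Suc d) k0 J" "\<forall>J. J1 \<le> J \<and> J < J2 \<longrightarrow> src d k0 J" "\<not> src d k0 J2"
    then show False using NoTT[OF big] by blast
  qed
  then show ?thesis
  proof (elim disjE exE conjE)
    fix J' assume J': "J' < J0" "\<not> src (Suc d) k0 J'" "\<forall>J. J' \<le> J \<and> J < J0 \<longrightarrow> src d k0 J"
    define N where "N = J0 - J'"
    have "\<forall>J. J' \<le> J \<and> J < J' + N \<longrightarrow> src d k0 J" using J' unfolding N_def by auto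
    then obtain v where v: "v \<in> homog d" "Phi (Lp * v) = Tm d k0 J' (- ((-1) ^ N * y)) - Tm d k0 (J' + N) ((-1) ^ N * (- ((-1) ^ N * y)))"
      using tele by blast
    have "Tm d k0 J' (- ((-1) ^ N * y)) = 0" using J'(2) by (simp add: Tm_def)
    moreover have "(-1) ^ N * (- ((-1) ^ N * y)) = - y"
      using neg_one_sq[of N, where 'k='k] by (simp add: algebra_simps)
    moreover have "J' + N = J0" unfolding N_def using J' by simp
    ultimately have "Phi (Lp * v) = Tm d k0 J0 y" using v(2) by (simp add: Tm_uminus)
    then show ?thesis using v(1) T0 by auto
  next
    fix J'' assume J'': "J0 \<le> J''" "\<not> src (Suc d) k0 (Suc J'')" "\<forall>J. J0 \<le> J \<and> J \<le> J'' \<longrightarrow> src d k0 J"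
    define N where "N = Suc J'' - J0"
    have "\<forall>J. J0 \<le> J \<and> J < J0 + N \<longrightarrow> src d k0 J" using J'' unfolding N_def by auto
    then obtain v where v: "v \<in> homog d" "Phi (Lp * v) = Tm d k0 J0 y - Tm d k0 (J0 + N) ((-1) ^ N * y)"
      using tele by blast
    moreover have "J0 + N = Suc J''" unfolding N_def using J'' by simp
    ultimately have "Phi (Lp * v) = Tm d k0 J0 y" using J''(2) by (simp add: Tm_def)
    then show ?thesis using v(1) T0 by auto
  qed
qed

lemma surj_case:
  assumes big: "a + q + c \<le> 2 * d + 3"
  shows "mult_surj (ideal_gen gens) (Lp :: 'k::comm_ring_1 poly3) d"
  unfolding mult_surj_def
proof
  fix G :: "'k poly3" assume G: "G \<in> homog (Suc d)"
  define z where "z = Phi G"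
  have kz: "\<forall>m\<in>Poly_Mapping.keys z. std m" unfolding z_def using keys_Phi by blast
  have hz: "z \<in> homog (Suc d)" unfolding z_def using G by (rule Phi_homog)
  have "\<forall>t\<in>Poly_Mapping.keys z. \<exists>v. v \<in> homog d \<and> Phi (Lp * v) = Poly_Mapping.single t (Poly_Mapping.lookup z t)"
  proof
    fix t assume t: "t \<in> Poly_Mapping.keys z"
    have "std t" using kz t by simp
    moreover have "mdeg t = Suc d" using hz t unfolding homog_def by simp
    ultimately show "\<exists>v. v \<in> homog d \<and> Phi (Lp * v) = Poly_Mapping.single t (Poly_Mapping.lookup z t)"
      using surj_one[OF big] by blast
  qed
  then obtain V where V: "\<forall>t\<in>Poly_Mapping.keys z. V t \<in> homog d \<and> Phi (Lp * V t) = Poly_Mapping.single t (Poly_Mapping.lookup z t)"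
    by metis
  define f where "f = (\<Sum>t\<in>Poly_Mapping.keys z. V t)"
  have hf: "f \<in> homog d" unfolding f_def using V by (intro homog_sum) auto
  have "Phi (Lp * f) = (\<Sum>t\<in>Poly_Mapping.keys z. Phi (Lp * V t))"
    unfolding f_def by (simp add: sum_distrib_left Phi_sum)
  also have "\<dots> = (\<Sum>t\<in>Poly_Mapping.keys z. Poly_Mapping.single t (Poly_Mapping.lookup z t))"
    using V by simp
  also have "\<dots> = z" by (rule pm_expand[symmetric])
  finally have "Phi (G - Lp * f) = 0" unfolding z_def by (simp add: Phi_diff)
  then have "G - Lp * f \<in> ideal_gen gens" using Phi_iff by blast
  then show "\<exists>f\<in>homog d. G - Lp * f \<in> ideal_gen gens" using hf by blast
qed

theorem main_wlp: "has_WLP (ideal_gen gens :: 'k::comm_ring_1 poly3 set)"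
  unfolding has_WLP_def
proof (rule bexI[of _ Lp])
  show "(Lp :: 'k poly3) \<in> homog 1" by (rule Lp_homog)
  show "\<forall>i. mult_inj (ideal_gen gens) (Lp :: 'k poly3) i \<or> mult_surj (ideal_gen gens) Lp i"
  proof
    fix d
    show "mult_inj (ideal_gen gens) (Lp :: 'k poly3) d \<or> mult_surj (ideal_gen gens) Lp d"
    proof (cases "2 * d + 3 < a + q + c")
      case True then show ?thesis using inj_case by blast
    next
      case False then show ?thesis using surj_case by (metis not_less)
    qed
  qed
qed

end

theorem theorem3p6:
  fixes a b c \<beta> \<gamma> :: int
  assumes "a \<ge> c" and "c \<ge> 2"
    and "1 \<le> \<beta>" and "\<beta> \<le> b - 1"
    and "max 1 (b - a + 1) \<le> \<gamma>" and "\<gamma> \<le> min (b - 1) (c - 1)"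
    and "a \<le> 2 * b - c"
    and "\<bar>a - b\<bar> + c - 1 \<le> \<beta>"
  shows "has_WLP (ideal_gen
          [ varX ^ nat a,
            varY ^ nat b - varX ^ nat (b - \<gamma>) * varZ ^ nat \<gamma>,
            varZ ^ nat c,
            varX ^ nat (a - b + \<gamma>) * varY ^ nat (b - \<beta>),
            varY ^ nat (b - \<beta>) * varZ ^ nat (c - \<gamma>) ]
          :: 'k::field_char_0 poly3 set)"
proof -
  have g1: "1 \<le> \<gamma>" and g2: "b - a + 1 \<le> \<gamma>" using assms(5) by simp_all
  have g3: "\<gamma> \<le> b - 1" and g4: "\<gamma> \<le> c - 1" using assms(6) by simp_all
  have ab1: "a - b \<le> \<bar>a - b\<bar>" and ab2: "b - a \<le> \<bar>a - b\<bar>" by simp_all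
  interpret W: wlp "nat a" "nat b" "nat c" "nat \<gamma>" "nat (b - \<beta>)" "nat (a - b + \<gamma>)" "nat (c - \<gamma>)" "nat (b - \<gamma>)"
  proof
    show "nat b = nat (b - \<gamma>) + nat \<gamma>" using g1 g3 by linarith
    show "nat a = nat (a - b + \<gamma>) + nat (b - \<gamma>)" using g1 g2 g3 by linarith
    show "nat c = nat (c - \<gamma>) + nat \<gamma>" using g1 g4 by linarith
    show "1 \<le> nat \<gamma>" using g1 by linarith
    show "1 \<le> nat (b - \<gamma>)" using g3 by linarith
    show "1 \<le> nat (a - b + \<gamma>)" using g2 by linarith
    show "1 \<le> nat (b - \<beta>)" using assms(4) by linarith
    show "nat (b - \<beta>) < nat b" using assms(3,4) by linarith
    show "1 \<le> nat (c - \<gamma>)" using g4 by linarith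
    show "nat (b - \<beta>) + nat c \<le> nat a + 1" using assms(1-4,8) ab2 by linarith
    show "nat a + nat (b - \<beta>) + nat c \<le> 2 * nat b + 1" using assms(1-4,8) ab1 by linarith
    show "nat (a - b + \<gamma>) + nat (b - \<beta>) \<le> nat b" using assms(1-4,8) ab1 g1 g2 g3 g4 by linarith
  qed
  have "[ varX ^ nat a,
            varY ^ nat b - varX ^ nat (b - \<gamma>) * varZ ^ nat \<gamma>,
            varZ ^ nat c,
            varX ^ nat (a - b + \<gamma>) * varY ^ nat (b - \<beta>),
            varY ^ nat (b - \<beta>) * varZ ^ nat (c - \<gamma>) ] = (W.gens :: 'k poly3 list)"
    by (simp add: W.gens_def varX_pow varY_pow varZ_pow mult_single)
  then show ?thesis using W.main_wlp[where 'k='k] by simp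
qed

end
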